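(* Assume $\mu<0$ and conditions (C1) and (C2). For $T\ge1$ let $\mu^*_T=\mathbb E^*_{\pi^*}(f(X_1,Y_{1+T}))$. Then the limit $\mu^*_\infty=\lim_{T\to\infty}\mu^*_T$ exists (and equals $\pi^*_1\otimes\pi^*_2(f)$, $\pi^*_1,\pi^*_2$ the marginals of $\pi^*$), and $\mu^*_\infty<\mu^*:=\pi^*(f)$.
   Context: Let $E$ be a finite set and $P,Q$ irreducible aperiodic stochastic $E\times E$ matrices with invariant probability vectors $\pi_P,\pi_Q$; $\pi=\pi_P\otimes\pi_Q$. Let $f:E\times E\to\mathbb Z$ with gcd of its values equal to $1$; $\nu(f)=\sum f\,d\nu$; $\mu=\pi(f)$. A cycle w.r.t. $P$ is a sequence $x_1,\dots,x_n$ with $P(x_k,x_{k+1})>0$ for all $k$, indices mod $n$. (C1): for some $n\ge1$ there are cycles $x_1,\dots,x_n$ w.r.t. $P$ and $y_1,\dots,y_n$ w.r.t. $Q$ with $\sum_kf(x_k,y_k)>0$. (C2): for every $T\ge1$ there are $n\ge1$ and cycles $x_1,\dots,x_n$ w.r.t. $P$ and $y_1,\dots,y_n$ w.r.t. $Q$ with $\sum_kf(x_k,y_k)\ne\sum_kf(x_k,y_{k+T\bmod n})$. Let $\Phi(\theta)_{(x,y),(x',y')}=e^{\theta f(x',y')}P_{x,x'}Q_{y,y'}$, $\varphi(\theta)$ its spectral radius, $\theta^*>0$ the unique positive solution of $\varphi(\theta)=1$, $r^*$ a positive right eigenvector of $\Phi(\theta^* )$ for eigenvalue 1, $R^*_{(x,y),(x',y')}=\frac{r^*(x',y')}{r^*(x,y)}\Phi(\theta^*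 )_{(x,y),(x',y')}$, and $\pi^*$ the invariant probability vector of $R^*$. $\mathbb P^*_{\pi^*}$ (expectation $\mathbb E^*_{\pi^*}$) is the law under which $(X_n,Y_n)_{n\ge0}$ is a stationary Markov chain on $E^2$ with transition matrix $R^*$. *)

theory Defs
  imports "HOL-Analysis.Analysis"
begin

primrec mpow :: "('a::finite \<Rightarrow> 'a \<Rightarrow> real) \<Rightarrow> nat \<Rightarrow> 'a \<Rightarrow> 'a \<Rightarrow> real" where
  "mpow A 0 = (\<lambda>i j. if i = j then 1 else 0)"
| "mpow A (Suc n) = (\<lambda>i j. \<Sum>k\<in>UNIV. mpow A n i k * A k j)"

definition stochastic :: "('a::finite \<Rightarrow> 'a \<Rightarrow> real) \<Rightarrow> bool" where
  "stochastic A \<longleftrightarrow> (\<forall>i j. A i j \<ge> 0) \<and> (\<forall>i. (\<Sum>j\<in>UNIV. A i j) = 1)"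

definition irreducible_mat :: "('a::finite \<Rightarrow> 'a \<Rightarrow> real) \<Rightarrow> bool" where
  "irreducible_mat A \<longleftrightarrow> (\<forall>i j. \<exists>n. mpow A n i j > 0)"

definition aperiodic_mat :: "('a::finite \<Rightarrow> 'a \<Rightarrow> real) \<Rightarrow> bool" where
  "aperiodic_mat A \<longleftrightarrow> (\<forall>i. Gcd {n. n > 0 \<and> mpow A n i i > 0} = (1::nat))"

definition invariant_prob :: "('a::finite \<Rightarrow> 'a \<Rightarrow> real) \<Rightarrow> ('a \<Rightarrow> real) \<Rightarrow> bool" where
  "invariant_prob A p \<longleftrightarrow> (\<forall>i. p i \<ge> 0) \<and> (\<Sum>i\<in>UNIV. p i) = 1 \<and>
     (\<forall>j. (\<Sum>i\<in>UNIV. p i * A i j) = p j)"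

definition spec_rad :: "('a::finite \<Rightarrow> 'a \<Rightarrow> real) \<Rightarrow> real" where
  "spec_rad A = Sup {cmod l | l. \<exists>v::'a \<Rightarrow> complex. v \<noteq> (\<lambda>_. 0) \<and>
      (\<forall>i. (\<Sum>j\<in>UNIV. complex_of_real (A i j) * v j) = l * v i)}"

definition is_cycle :: "('a \<Rightarrow> 'a \<Rightarrow> real) \<Rightarrow> nat \<Rightarrow> (nat \<Rightarrow> 'a) \<Rightarrow> bool" where
  "is_cycle P n x \<longleftrightarrow> n \<ge> 1 \<and> (\<forall>k<n. P (x k) (x ((k + 1) mod n)) > 0)"

definition cond_C1 :: "('a \<Rightarrow> 'a \<Rightarrow> real) \<Rightarrow> ('a \<Rightarrow> 'a \<Rightarrow> real) \<Rightarrow> ('a \<Rightarrow> 'a \<Rightarrow> int) \<Rightarrow> bool" where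
  "cond_C1 P Q f \<longleftrightarrow> (\<exists>n\<ge>1. \<exists>x y. is_cycle P n x \<and> is_cycle Q n y \<and>
      (\<Sum>k<n. f (x k) (y k)) > 0)"

definition cond_C2 :: "('a \<Rightarrow> 'a \<Rightarrow> real) \<Rightarrow> ('a \<Rightarrow> 'a \<Rightarrow> real) \<Rightarrow> ('a \<Rightarrow> 'a \<Rightarrow> int) \<Rightarrow> bool" where
  "cond_C2 P Q f \<longleftrightarrow> (\<forall>T::nat. T \<ge> 1 \<longrightarrow> (\<exists>n\<ge>1. \<exists>x y. is_cycle P n x \<and> is_cycle Q n y \<and>
      (\<Sum>k<n. f (x k) (y k)) \<noteq> (\<Sum>k<n. f (x k) (y ((k + T) mod n)))))"

definition Phi :: "('a \<Rightarrow> 'a \<Rightarrow> real) \<Rightarrow> ('a \<Rightarrow> 'a \<Rightarrow> real) \<Rightarrow> ('a \<Rightarrow> 'a \<Rightarrow> int) \<Rightarrow> real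
    \<Rightarrow> ('a \<times> 'a) \<Rightarrow> ('a \<times> 'a) \<Rightarrow> real" where
  "Phi P Q f \<theta> = (\<lambda>(x, y) (x', y'). exp (\<theta> * of_int (f x' y')) * P x x' * Q y y')"

text \<open>Doob transform R* of Phi(theta) by the positive right eigenvector r.\<close>
definition Rstar :: "('a \<Rightarrow> 'a \<Rightarrow> real) \<Rightarrow> ('a \<Rightarrow> 'a \<Rightarrow> real) \<Rightarrow> ('a \<Rightarrow> 'a \<Rightarrow> int) \<Rightarrow> real
    \<Rightarrow> ('a \<times> 'a \<Rightarrow> real) \<Rightarrow> ('a \<times> 'a) \<Rightarrow> ('a \<times> 'a) \<Rightarrow> real" where
  "Rstar P Q f \<theta> r = (\<lambda>u v. r v / r u * Phi P Q f \<theta> u v)"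

text \<open>E*_{pi*}(f(X_1, Y_{1+T})) for the stationary chain with transition matrix R
  and initial law p: the time-1 law is p, and (X_{1+T},Y_{1+T}) given (X_1,Y_1)
  has law R^T.\<close>
definition mu_star_T :: "(('a::finite \<times> 'a) \<Rightarrow> ('a \<times> 'a) \<Rightarrow> real) \<Rightarrow> ('a \<times> 'a \<Rightarrow> real)
    \<Rightarrow> ('a \<Rightarrow> 'a \<Rightarrow> int) \<Rightarrow> nat \<Rightarrow> real" where
  "mu_star_T R p f T = (\<Sum>u\<in>UNIV. \<Sum>v\<in>UNIV. p u * mpow R T u v * of_int (f (fst u) (snd v)))"

end

theory Submission
  imports Defs
begin
lemma sum_pair_UNIV:
  "(\<Sum>u\<in>(UNIV::('a::finite \<times> 'b::finite) set). g u) = (\<Sum>x\<in>UNIV. \<Sum>y\<in>UNIV. g (x, y))"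
  by (simp add: sum.cartesian_product)

lemma mpow_add:
  "mpow A (a + b) i j = (\<Sum>k\<in>UNIV. mpow A a i k * mpow A b k j)"
proof (induction b arbitrary: j)
  case 0
  have "(\<Sum>k\<in>UNIV. mpow A a i k * mpow A 0 k j) = (\<Sum>k\<in>UNIV. if k = j then mpow A a i k else 0)"
    by (intro sum.cong refl) simp
  then show ?case by simp
next
  case (Suc b)
  have "mpow A (a + Suc b) i j = (\<Sum>k\<in>UNIV. (\<Sum>l\<in>UNIV. mpow A a i l * mpow A b l k) * A k j)"
    using Suc by simp
  also have "\<dots> = (\<Sum>l\<in>UNIV. mpow A a i l * (\<Sum>k\<in>UNIV. mpow A b l k * A k j))"
    by (simp add: sum_distrib_left sum_distrib_right mult.assoc) (rule sum.swap)
  finally show ?case by simp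
qed

lemma mpow_one: "mpow A 1 = A"
proof (intro ext)
  fix i j
  have "mpow A 1 i j = (\<Sum>k\<in>UNIV. mpow A 0 i k * A k j)"
    by (simp only: One_nat_def mpow.simps(2))
  also have "\<dots> = (\<Sum>k\<in>UNIV. (if i = k then A k j else 0))"
    by (intro sum.cong refl) simp
  also have "\<dots> = A i j" by simp
  finally show "mpow A 1 i j = A i j" .
qed

lemma mpow_nonneg: "(\<And>i j. A i j \<ge> 0) \<Longrightarrow> mpow A n i j \<ge> 0"
  by (induction n arbitrary: j) (auto intro!: sum_nonneg)

lemma mpow_rowsum: assumes "stochastic A" shows "(\<Sum>j\<in>UNIV. mpow A n i j) = 1"
proof (induction n)
  case 0 then show ?case by simp
next
  case (Suc n)
  have "(\<Sum>j\<in>UNIV. mpow A (Suc n) i j) = (\<Sum>k\<in>UNIV. mpow A n i k * (\<Sum>j\<in>UNIV. A k j))"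
    by (simp add: sum_distrib_left) (rule sum.swap)
  also have "\<dots> = 1" using assms Suc by (simp add: stochastic_def)
  finally show ?case .
qed

lemma mpow_le1: assumes "stochastic A" shows "mpow A n i j \<le> 1"
proof -
  have nn: "\<And>i j. A i j \<ge> 0" using assms by (simp add: stochastic_def)
  have "mpow A n i j \<le> (\<Sum>j\<in>UNIV. mpow A n i j)"
    by (rule member_le_sum) (simp_all add: mpow_nonneg nn)
  then show ?thesis using mpow_rowsum[OF assms, of n i] by linarith
qed

lemma mpow_inv: assumes "invariant_prob A p" shows "(\<Sum>i\<in>UNIV. p i * mpow A n i j) = p j"
proof (induction n arbitrary: j)
  case 0
  have "(\<Sum>i\<in>UNIV. p i * mpow A 0 i j) = (\<Sum>i\<in>UNIV. if i = j then p i else 0)"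
    by (intro sum.cong refl) simp
  then show ?case by simp
next
  case (Suc n)
  have "(\<Sum>i\<in>UNIV. p i * mpow A (Suc n) i j) = (\<Sum>k\<in>UNIV. (\<Sum>i\<in>UNIV. p i * mpow A n i k) * A k j)"
    by (simp add: sum_distrib_left sum_distrib_right mult.assoc) (rule sum.swap)
  also have "\<dots> = p j" using assms Suc by (simp add: invariant_prob_def)
  finally show ?case .
qed

lemma mpow_ge_term: assumes "\<And>i j. A i j \<ge> 0"
  shows "mpow A (a + b) i j \<ge> mpow A a i k * mpow A b k j"
  unfolding mpow_add
  by (rule member_le_sum) (simp_all add: mpow_nonneg assms)

lemma semigroup_mult_mem:
  fixes S :: "nat set"
  assumes add: "\<And>a b. a \<in> S \<Longrightarrow> b \<in> S \<Longrightarrow> a + b \<in> S" and c: "c \<in> S"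
  shows "k \<ge> 1 \<Longrightarrow> k * c \<in> S"
proof (induction k)
  case 0 then show ?case by simp
next
  case (Suc k)
  show ?case
  proof (cases "k = 0")
    case True then show ?thesis using c by simp
  next
    case False then show ?thesis using Suc add[of "k*c" c] c by (simp add: add.commute)
  qed
qed

lemma semigroup_gcd1:
  fixes S :: "nat set"
  assumes add: "\<And>a b. a \<in> S \<Longrightarrow> b \<in> S \<Longrightarrow> a + b \<in> S"
    and g: "Gcd S = 1" and z: "0 \<notin> S"
  shows "\<exists>N. \<forall>n\<ge>N. n \<in> S"
proof -
  define D where "D = {int p - int q | p q. p \<in> S \<and> q \<in> S}"
  have Dadd: "x + y \<in> D" if xD: "x \<in> D" and yD: "y \<in> D" for x y
  proof -
    obtain p q where "x = int p - int q" "p \<in> S" "q \<in> S" using xD D_def by auto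
    moreover obtain p' q' where "y = int p' - int q'" "p' \<in> S" "q' \<in> S" using yD D_def by auto
    ultimately show ?thesis unfolding D_def
      by (intro CollectI exI[of _ "p + p'"] exI[of _ "q + q'"]) (auto intro: add)
  qed
  have Dneg: "- x \<in> D" if xD: "x \<in> D" for x
  proof -
    obtain p q where "x = int p - int q" "p \<in> S" "q \<in> S" using xD D_def by auto
    then show ?thesis unfolding D_def by (intro CollectI exI[of _ q] exI[of _ p]) auto
  qed
  have "S \<noteq> {}" using g by auto
  then obtain s where s: "s \<in> S" by auto
  have D0: "0 \<in> D" unfolding D_def using s by force
  have Dnat: "int k * x \<in> D" if "x \<in> D" for k x
  proof (induction k)
    case 0 then show ?case using D0 by simp
  next
    case (Suc k) then show ?case using Dadd[OF Suc that] by (simp add: algebra_simps)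
  qed
  have Dint: "k * x \<in> D" if "x \<in> D" for k x
  proof (cases "k \<ge> 0")
    case True then show ?thesis using Dnat[OF that, of "nat k"] by simp
  next
    case False then show ?thesis using Dneg[OF Dnat[OF that, of "nat (-k)"]] by simp
  qed
  have SD: "int a \<in> D" if "a \<in> S" for a
    unfolding D_def using that add[OF that that] by (intro CollectI exI[of _ "a + a"] exI[of _ a]) auto
  have sp: "s > 0" using s z by (cases s) auto
  have ex: "\<exists>n::nat. n > 0 \<and> int n \<in> D" using SD[OF s] sp by blast
  define d where "d = (LEAST n::nat. n > 0 \<and> int n \<in> D)"
  have d: "d > 0" "int d \<in> D" using LeastI_ex[OF ex] unfolding d_def by auto
  have dmin: "\<not> (n > 0 \<and> int n \<in> D)" if "n < d" for n
    using not_less_Least[of n "\<lambda>n. n > 0 \<and> int n \<in> D"] that unfolding d_def by blast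
  have ddvd: "int d dvd x" if "x \<in> D" for x
  proof -
    have eq: "x mod int d = x + (- (x div int d)) * int d" by (simp add: minus_div_mult_eq_mod [symmetric] algebra_simps)
    have m: "x mod int d \<in> D" unfolding eq by (rule Dadd[OF that Dint[OF d(2)]])
    have "0 \<le> x mod int d" "x mod int d < int d" using d(1) by auto
    with m dmin[of "nat (x mod int d)"] have "x mod int d = 0" by auto
    then show ?thesis by (simp add: dvd_eq_mod_eq_0)
  qed
  have "d dvd a" if "a \<in> S" for a using ddvd[OF SD[OF that]] by simp
  then have "d dvd Gcd S" by (intro Gcd_greatest) auto
  then have "d = 1" using g by simp
  then have "1 \<in> D" using d by simp
  then have "\<exists>p q. 1 = int p - int q \<and> p \<in> S \<and> q \<in> S" unfolding D_def by blast
  then obtain p q where pq: "1 = int p - int q" "p \<in> S" "q \<in> S" by blast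
  then have p: "p = q + 1" by linarith
  have "q \<noteq> 0" using pq(3) z by metis
  then have q1: "q \<ge> 1" by simp
  show ?thesis
  proof (intro exI[of _ "q * q"] allI impI)
    fix n assume n: "n \<ge> q * q"
    define a where "a = n div q"
    define b where "b = n mod q"
    have nab: "n = a * q + b" unfolding a_def b_def by simp
    have bq: "b < q" unfolding b_def using q1 by simp
    have "q * q div q \<le> n div q" by (rule div_le_mono[OF n])
    then have aq: "a \<ge> q" unfolding a_def using q1 by simp
    define c where "c = a - b"
    have c: "a = b + c" unfolding c_def using aq bq by simp
    have e1: "a - b = c" using c by simp
    have e2: "b * p = b * q + b" using p by simp
    have e3: "a * q = b * q + c * q" using c by (simp add: add_mult_distrib)
    have n2: "n = (a - b) * q + b * p" unfolding e1 e2 using nab e3 by linarith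
    have m1: "(a - b) * q \<in> S" using semigroup_mult_mem[OF add pq(3)] bq aq by simp
    show "n \<in> S"
    proof (cases "b = 0")
      case True then show ?thesis using n2 m1 by simp
    next
      case False
      then have "b * p \<in> S" using semigroup_mult_mem[OF add pq(2)] by simp
      from add[OF m1 this] show ?thesis using n2 by simp
    qed
  qed
qed

lemma primitive:
  fixes A :: "'a::finite \<Rightarrow> 'a \<Rightarrow> real"
  assumes st: "stochastic A" and irr: "irreducible_mat A" and ap: "aperiodic_mat A"
  shows "\<exists>N. \<forall>n\<ge>N. \<forall>i j. mpow A n i j > 0"
proof -
  have nn: "\<And>i j. A i j \<ge> 0" using st by (simp add: stochastic_def)
  have diag: "\<exists>N. \<forall>n\<ge>N. mpow A n i i > 0" for i
  proof -
    define S where "S = {n. n > 0 \<and> mpow A n i i > 0}"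
    have add: "a + b \<in> S" if "a \<in> S" "b \<in> S" for a b
    proof -
      have "mpow A (a + b) i i \<ge> mpow A a i i * mpow A b i i" by (rule mpow_ge_term[OF nn])
      moreover have "mpow A a i i * mpow A b i i > 0" using that unfolding S_def by simp
      ultimately have "mpow A (a + b) i i > 0" by linarith
      then show ?thesis using that unfolding S_def by simp
    qed
    have g: "Gcd S = 1" using ap unfolding aperiodic_mat_def S_def by simp
    have z: "0 \<notin> S" unfolding S_def by simp
    obtain N where "\<forall>n\<ge>N. n \<in> S" using semigroup_gcd1[OF add g z] by blast
    then show ?thesis unfolding S_def by blast
  qed
  have "\<forall>i. \<exists>N. \<forall>n\<ge>N. mpow A n i i > 0" using diag by blast
  then obtain Nd where Nd: "\<And>i n. n \<ge> Nd i \<Longrightarrow> mpow A n i i > 0" by metis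
  have "\<forall>p. \<exists>n. mpow A n (fst p) (snd p) > 0" using irr unfolding irreducible_mat_def by blast
  then obtain nf where nf: "\<And>p. mpow A (nf p) (fst p) (snd p) > 0" by metis
  define N where "N = (\<Sum>i\<in>UNIV. Nd i) + (\<Sum>p\<in>UNIV. nf p)"
  show ?thesis
  proof (intro exI[of _ N] allI impI)
    fix n i j assume n: "n \<ge> N"
    have "Nd i \<le> (\<Sum>i\<in>UNIV. Nd i)" by (rule member_le_sum) auto
    moreover have "nf (i, j) \<le> (\<Sum>p\<in>UNIV. nf p)" by (rule member_le_sum) auto
    ultimately have le: "Nd i + nf (i, j) \<le> n" using n unfolding N_def by linarith
    have "mpow A ((n - nf (i, j)) + nf (i, j)) i j \<ge> mpow A (n - nf (i, j)) i i * mpow A (nf (i, j)) i j"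
      by (rule mpow_ge_term[OF nn])
    moreover have "mpow A (n - nf (i, j)) i i > 0" using Nd[of i "n - nf (i, j)"] le by simp
    moreover have "mpow A (nf (i, j)) i j > 0" using nf[of "(i, j)"] by simp
    ultimately have "mpow A ((n - nf (i, j)) + nf (i, j)) i j > 0"
      by (smt (verit) mult_pos_pos)
    then show "mpow A n i j > 0" using le by simp
  qed
qed

lemma mpow_prod_lb:
  fixes R :: "('a::finite \<times> 'b::finite) \<Rightarrow> ('a \<times> 'b) \<Rightarrow> real"
    and P :: "'a \<Rightarrow> 'a \<Rightarrow> real" and Q :: "'b \<Rightarrow> 'b \<Rightarrow> real"
  assumes c: "c \<ge> 0" and lb: "\<And>x y x' y'. R (x, y) (x', y') \<ge> c * P x x' * Q y y'"
    and P: "\<And>i j. P i j \<ge> 0" and Q: "\<And>i j. Q i j \<ge> 0"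
  shows "mpow R n (x, y) (x', y') \<ge> c ^ n * mpow P n x x' * mpow Q n y y'"
proof (induction n arbitrary: x' y')
  case 0 then show ?case by auto
next
  case (Suc n)
  have "c ^ Suc n * mpow P (Suc n) x x' * mpow Q (Suc n) y y'
      = (\<Sum>a\<in>UNIV. \<Sum>b\<in>UNIV. (c ^ n * mpow P n x a * mpow Q n y b) * (c * P a x' * Q b y'))"
    by (simp add: sum_product sum_distrib_left mult_ac)
  also have "\<dots> \<le> (\<Sum>a\<in>UNIV. \<Sum>b\<in>UNIV. mpow R n (x, y) (a, b) * R (a, b) (x', y'))"
  proof (intro sum_mono)
    fix a b
    have "0 \<le> c ^ n * mpow P n x a * mpow Q n y b"
      using c P Q by (simp add: mpow_nonneg)
    moreover have "0 \<le> c * P a x' * Q b y'" using c P Q by simp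
    ultimately show "(c ^ n * mpow P n x a * mpow Q n y b) * (c * P a x' * Q b y') \<le> mpow R n (x, y) (a, b) * R (a, b) (x', y')"
      using Suc.IH[where x'=a and y'=b] lb[where x=a and y=b and x'=x' and y'=y'] by (intro mult_mono) auto
  qed
  also have "\<dots> = mpow R (Suc n) (x, y) (x', y')"
    by (simp add: sum_pair_UNIV)
  finally show ?case .
qed

lemma finite_pos_lb:
  fixes g :: "'a::finite \<Rightarrow> real"
  assumes "\<And>z. g z > 0"
  shows "\<exists>c>0. \<forall>z. c \<le> g z"
proof (intro exI[of _ "Min (range g)"] conjI allI)
  have "Min (range g) \<in> range g" by (rule Min_in) auto
  then show "Min (range g) > 0" using assms by auto
  fix z show "Min (range g) \<le> g z" by (rule Min_le) auto
qed

lemma osc_step: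
  fixes M :: "'a::finite \<Rightarrow> 'a \<Rightarrow> real"
  assumes Mlb: "\<And>u v. M u v \<ge> \<epsilon>" and e0: "\<epsilon> \<ge> 0" and rs: "\<And>u. (\<Sum>v\<in>UNIV. M u v) = 1"
    and hD: "\<And>v1 v2. \<bar>h v1 - h v2\<bar> \<le> D"
  shows "\<bar>(\<Sum>v\<in>UNIV. M u1 v * h v) - (\<Sum>v\<in>UNIV. M u2 v * h v)\<bar> \<le> (1 - real CARD('a) * \<epsilon>) * D"
proof -
  have "Min (range h) \<in> range h" by (rule Min_in) auto
  then obtain v0 where v0: "Min (range h) = h v0" by blast
  have hv0: "h v0 \<le> h v" for v unfolding v0[symmetric] by (rule Min_le) auto
  define r where "r u = (\<Sum>v\<in>UNIV. (M u v - \<epsilon>) * (h v - h v0))" for u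
  have sumM: "(\<Sum>v\<in>UNIV. M u v - \<epsilon>) = 1 - real CARD('a) * \<epsilon>" for u
    using rs[of u] by (simp add: sum_subtractf)
  have eq: "(\<Sum>v\<in>UNIV. M u v * h v) = r u + \<epsilon> * (\<Sum>v\<in>UNIV. h v - h v0) + h v0" for u
  proof -
    have "r u = (\<Sum>v\<in>UNIV. M u v * h v) - h v0 * (\<Sum>v\<in>UNIV. M u v) - \<epsilon> * (\<Sum>v\<in>UNIV. h v - h v0)"
      unfolding r_def by (simp add: algebra_simps sum_subtractf sum.distrib sum_distrib_left sum_distrib_right)
    then show ?thesis using rs[of u] by simp
  qed
  have r0: "r u \<ge> 0" for u unfolding r_def
    using Mlb hv0 by (intro sum_nonneg mult_nonneg_nonneg) auto
  have r1: "r u \<le> (1 - real CARD('a) * \<epsilon>) * D" for u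
  proof -
    have "r u \<le> (\<Sum>v\<in>UNIV. (M u v - \<epsilon>) * D)" unfolding r_def
    proof (intro sum_mono mult_left_mono)
      fix v show "h v - h v0 \<le> D" using hD[of v v0] by simp
      show "0 \<le> M u v - \<epsilon>" using Mlb[of u v] by simp
    qed
    also have "\<dots> = (1 - real CARD('a) * \<epsilon>) * D" by (simp add: sum_distrib_right[symmetric] sumM)
    finally show ?thesis .
  qed
  show ?thesis unfolding eq using r0[of u1] r0[of u2] r1[of u1] r1[of u2] by simp
qed

lemma conv_primitive:
  fixes R :: "'a::finite \<Rightarrow> 'a \<Rightarrow> real"
  assumes st: "stochastic R" and inv: "invariant_prob R p" and m: "m \<ge> 1"
    and pos: "\<And>u v. mpow R m u v > 0"
  shows "(\<lambda>T. mpow R T u v) \<longlonglongrightarrow> p v"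
proof -
  obtain \<epsilon> where e: "\<epsilon> > 0" "\<forall>z. \<epsilon> \<le> mpow R m (fst z) (snd z)"
    using finite_pos_lb[of "\<lambda>z. mpow R m (fst z) (snd z)"] pos by blast
  have elb: "\<epsilon> \<le> mpow R m u w" for u w using e(2)[rule_format, of "(u, w)"] by simp
  define lam where "lam = 1 - real CARD('a) * \<epsilon>"
  have "real CARD('a) * \<epsilon> = (\<Sum>w\<in>(UNIV::'a set). \<epsilon>)" by simp
  also have "\<dots> \<le> (\<Sum>w\<in>UNIV. mpow R m u w)" by (rule sum_mono) (rule elb)
  also have "\<dots> = 1" by (rule mpow_rowsum[OF st])
  finally have l0: "lam \<ge> 0" unfolding lam_def by simp
  have l1: "lam < 1" unfolding lam_def using e(1) by simp
  define col where "col T w = mpow R T w v" for T w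
  have colb: "0 \<le> col T w \<and> col T w \<le> 1" for T w
    unfolding col_def using mpow_le1[OF st] mpow_nonneg[of R] st by (auto simp: stochastic_def)
  have osc: "\<forall>u1 u2. \<bar>col T u1 - col T u2\<bar> \<le> lam ^ (T div m)" for T
  proof (induction T rule: less_induct)
    case (less T)
    show ?case
    proof (cases "T < m")
      case True
      then have "T div m = 0" by simp
      then show ?thesis using colb by (simp add: abs_le_iff) (smt (verit) colb)
    next
      case False
      then have Tm: "T = m + (T - m)" by simp
      have rec: "col T w = (\<Sum>k\<in>UNIV. mpow R m w k * col (T - m) k)" for w
        unfolding col_def by (subst Tm) (rule mpow_add)
      have IH: "\<bar>col (T - m) v1 - col (T - m) v2\<bar> \<le> lam ^ ((T - m) div m)" for v1 v2
        using less[of "T - m"] m False by auto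
      have dv: "T div m = Suc ((T - m) div m)" using m False by (simp add: le_div_geq)
      show ?thesis
      proof (intro allI)
        fix u1 u2
        have A: "\<bar>col T u1 - col T u2\<bar> \<le> (1 - real CARD('a) * \<epsilon>) * lam ^ ((T - m) div m)"
          unfolding rec
          by (rule osc_step[OF elb less_imp_le[OF e(1)] mpow_rowsum[OF st] IH])
        then have "\<bar>col T u1 - col T u2\<bar> \<le> lam * lam ^ ((T - m) div m)"
          by (simp add: lam_def)
        then show "\<bar>col T u1 - col T u2\<bar> \<le> lam ^ (T div m)" using dv by simp
      qed
    qed
  qed
  have bnd: "norm (mpow R T u v - p v) \<le> lam ^ (T div m)" for T
  proof -
    have p1: "(\<Sum>w\<in>UNIV. p w) = 1" and pnn: "\<And>w. p w \<ge> 0" using inv by (auto simp: invariant_prob_def)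
    have "mpow R T u v - p v = (\<Sum>w\<in>UNIV. p w * (col T u - col T w))"
      using mpow_inv[OF inv, of T v] p1
      by (simp add: col_def algebra_simps sum_subtractf sum_distrib_right[symmetric])
    also have "\<bar>\<dots>\<bar> \<le> (\<Sum>w\<in>UNIV. p w * lam ^ (T div m))"
    proof -
      have "\<bar>(\<Sum>w\<in>UNIV. p w * (col T u - col T w))\<bar> \<le> (\<Sum>w\<in>UNIV. \<bar>p w * (col T u - col T w)\<bar>)"
        by (rule sum_abs)
      also have "\<dots> \<le> (\<Sum>w\<in>UNIV. p w * lam ^ (T div m))"
        using osc pnn by (intro sum_mono) (simp add: abs_mult mult_left_mono)
      finally show ?thesis .
    qed
    also have "\<dots> = lam ^ (T div m)" using p1 by (simp add: sum_distrib_right[symmetric])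
    finally show ?thesis by simp
  qed
  have fl: "filterlim (\<lambda>T. T div m) sequentially sequentially"
    unfolding filterlim_at_top eventually_sequentially
  proof (intro allI exI[of _ "Z * m" for Z] impI)
    fix Z n :: nat assume "Z * m \<le> n"
    then have "Z * m div m \<le> n div m" by (rule div_le_mono)
    then show "Z \<le> n div m" using m by simp
  qed
  have "(\<lambda>k. lam ^ k) \<longlonglongrightarrow> 0" by (rule LIMSEQ_power_zero) (use l0 l1 in simp)
  from filterlim_compose[OF this fl] have "(\<lambda>T. lam ^ (T div m)) \<longlonglongrightarrow> 0" .
  then have "(\<lambda>T. mpow R T u v - p v) \<longlonglongrightarrow> 0"
    by (rule Lim_null_comparison[rotated]) (use bnd in simp)
  then show ?thesis by (simp add: LIM_zero_iff)
qed

lemma shift_bij: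
  assumes n: "n \<ge> (1::nat)"
  shows "bij_betw (\<lambda>k. (k + 1) mod n) {..<n} {..<n}"
proof -
  have inj: "inj_on (\<lambda>k. (k + 1) mod n) {..<n}"
  proof (rule inj_onI)
    fix a b assume a: "a \<in> {..<n}" and b: "b \<in> {..<n}" and e: "(a + 1) mod n = (b + 1) mod n"
    show "a = b"
    proof (cases "a + 1 = n")
      case True
      then have "(b + 1) mod n = 0" using e by simp
      then have "b + 1 = n" using b by (metis lessThan_iff Suc_eq_plus1 Suc_leI le_neq_implies_less mod_less mod_self nat.distinct(1))
      then show ?thesis using True by simp
    next
      case False
      then have a1: "(a + 1) mod n = a + 1" using a by simp
      show ?thesis
      proof (cases "b + 1 = n")
        case True then show ?thesis using e a1 by simp
      next
        case False then have "(b + 1) mod n = b + 1" using b by simp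
        then show ?thesis using e a1 by simp
      qed
    qed
  qed
  have sub: "(\<lambda>k. (k + 1) mod n) ` {..<n} \<subseteq> {..<n}" using n by auto
  have "(\<lambda>k. (k + 1) mod n) ` {..<n} = {..<n}" by (rule endo_inj_surj[OF _ sub inj]) simp
  then show ?thesis using inj by (simp add: bij_betw_def)
qed

lemma prod_shift:
  fixes g :: "nat \<Rightarrow> real"
  assumes "n \<ge> 1"
  shows "(\<Prod>k<n. g ((k + 1) mod n)) = (\<Prod>k<n. g k)"
  using prod.reindex_bij_betw[OF shift_bij[OF assms], of g] .

lemma sum_shift:
  fixes g :: "nat \<Rightarrow> real"
  assumes "n \<ge> 1"
  shows "(\<Sum>k<n. g ((k + 1) mod n)) = (\<Sum>k<n. g k)"
  using sum.reindex_bij_betw[OF shift_bij[OF assms], of g] .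

lemma cycle_weight:
  fixes P Q :: "'e \<Rightarrow> 'e \<Rightarrow> real" and rs :: "'e \<times> 'e \<Rightarrow> real"
    and n :: nat and x z :: "nat \<Rightarrow> 'e"
  assumes n: "n \<ge> 1" and rs: "\<forall>u. rs u > 0"
  shows "(\<Prod>k<n. Rstar P Q f \<theta> rs (x k, z k) (x ((k + 1) mod n), z ((k + 1) mod n)))
    = exp (\<theta> * (\<Sum>k<n. of_int (f (x k) (z k)))) * (\<Prod>k<n. P (x k) (x ((k + 1) mod n)))
       * (\<Prod>k<n. Q (z k) (z ((k + 1) mod n)))"
proof -
  define s where "s k = (k + 1) mod n" for k
  define w where "w k = (x k, z k)" for k
  have "(\<Prod>k<n. Rstar P Q f \<theta> rs (x k, z k) (x (s k), z (s k)))
     = (\<Prod>k<n. (rs (w (s k)) / rs (w k)) * (exp (\<theta> * of_int (f (x (s k)) (z (s k))))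
          * P (x k) (x (s k)) * Q (z k) (z (s k))))"
    by (simp add: Rstar_def Phi_def w_def)
  also have "\<dots> = ((\<Prod>k<n. rs (w (s k))) / (\<Prod>k<n. rs (w k))) * (\<Prod>k<n. exp (\<theta> * of_int (f (x (s k)) (z (s k)))))
          * (\<Prod>k<n. P (x k) (x (s k))) * (\<Prod>k<n. Q (z k) (z (s k)))"
    by (simp add: prod.distrib prod_dividef mult.assoc)
  also have "(\<Prod>k<n. rs (w (s k))) = (\<Prod>k<n. rs (w k))"
    unfolding s_def by (rule prod_shift[OF n])
  also have "(\<Prod>k<n. exp (\<theta> * of_int (f (x (s k)) (z (s k))))) = (\<Prod>k<n. exp (\<theta> * of_int (f (x k) (z k))))"
    unfolding s_def by (rule prod_shift[OF n, of "\<lambda>k. exp (\<theta> * of_int (f (x k) (z k)))"])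
  also have "\<dots> = exp (\<theta> * (\<Sum>k<n. of_int (f (x k) (z k))))"
    by (simp add: exp_sum sum_distrib_left)
  also have "(\<Prod>k<n. rs (w k)) > 0" using rs by (intro prod_pos) blast
  then have "(\<Prod>k<n. rs (w k)) \<noteq> 0" by linarith
  then have "(\<Prod>k<n. rs (w k)) / (\<Prod>k<n. rs (w k)) = 1" by (rule divide_self)
  finally show ?thesis unfolding s_def by simp
qed

lemma not_product:
  fixes P Q :: "'e::finite \<Rightarrow> 'e \<Rightarrow> real" and rs :: "'e \<times> 'e \<Rightarrow> real"
  assumes rs: "\<forall>u. rs u > 0" and th: "\<theta> > 0" and C2: "cond_C2 P Q f"
    and H: "\<And>u u'. Rstar P Q f \<theta> rs u u' = KX (fst u) (fst u') * KY (snd u) (snd u')"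
  shows False
proof -
  obtain n x y where n: "n \<ge> 1" and cx: "is_cycle P n x" and cy: "is_cycle Q n y"
    and ne: "(\<Sum>k<n. f (x k) (y k)) \<noteq> (\<Sum>k<n. f (x k) (y ((k + 1) mod n)))"
    using C2 unfolding cond_C2_def by fastforce
  define s where "s k = (k + 1) mod n" for k
  define y' where "y' k = y (s k)" for k
  have W: "exp (\<theta> * (\<Sum>k<n. of_int (f (x k) (z k)))) * (\<Prod>k<n. P (x k) (x (s k)))
       * (\<Prod>k<n. Q (z k) (z (s k)))
     = (\<Prod>k<n. KX (x k) (x (s k))) * (\<Prod>k<n. KY (z k) (z (s k)))" for z
  proof -
    have "exp (\<theta> * (\<Sum>k<n. of_int (f (x k) (z k)))) * (\<Prod>k<n. P (x k) (x (s k)))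
       * (\<Prod>k<n. Q (z k) (z (s k))) = (\<Prod>k<n. Rstar P Q f \<theta> rs (x k, z k) (x (s k), z (s k)))"
      unfolding s_def by (rule cycle_weight[OF n rs, symmetric])
    also have "\<dots> = (\<Prod>k<n. KX (x k) (x (s k)) * KY (z k) (z (s k)))" by (simp add: H)
    finally show ?thesis by (simp add: prod.distrib)
  qed
  have Qs: "(\<Prod>k<n. Q (y' k) (y' (s k))) = (\<Prod>k<n. Q (y k) (y (s k)))"
    unfolding y'_def s_def by (rule prod_shift[OF n, of "\<lambda>k. Q (y k) (y ((k + 1) mod n))"])
  have Ks: "(\<Prod>k<n. KY (y' k) (y' (s k))) = (\<Prod>k<n. KY (y k) (y (s k)))"
    unfolding y'_def s_def by (rule prod_shift[OF n, of "\<lambda>k. KY (y k) (y ((k + 1) mod n))"])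
  have PP: "(\<Prod>k<n. P (x k) (x (s k))) > 0" using cx unfolding is_cycle_def s_def
    by (intro prod_pos) auto
  have QQ: "(\<Prod>k<n. Q (y k) (y (s k))) > 0" using cy unfolding is_cycle_def s_def
    by (intro prod_pos) auto
  define C where "C = (\<Prod>k<n. P (x k) (x (s k))) * (\<Prod>k<n. Q (y k) (y (s k)))"
  have "C > 0" unfolding C_def using PP QQ by (rule mult_pos_pos)
  then have C0: "C \<noteq> 0" by simp
  from W[of y] W[of y'] Qs Ks have
    "exp (\<theta> * (\<Sum>k<n. of_int (f (x k) (y k)))) * C
   = exp (\<theta> * (\<Sum>k<n. of_int (f (x k) (y' k)))) * C"
    unfolding C_def by (simp add: mult.assoc)
  then have "exp (\<theta> * (\<Sum>k<n. of_int (f (x k) (y k)))) = exp (\<theta> * (\<Sum>k<n. of_int (f (x k) (y' k))))"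
    using C0 by simp
  then have "(\<Sum>k<n. real_of_int (f (x k) (y k))) = (\<Sum>k<n. of_int (f (x k) (y' k)))"
    using th by simp
  then have "of_int (\<Sum>k<n. f (x k) (y k)) = (of_int (\<Sum>k<n. f (x k) (y' k)) :: real)"
    by simp
  then have "(\<Sum>k<n. f (x k) (y k)) = (\<Sum>k<n. f (x k) (y' k))" by (simp only: of_int_eq_iff)
  then show False using ne unfolding y'_def s_def by simp
qed

lemma sum4_swapX:
  "(\<Sum>x\<in>UNIV. \<Sum>y\<in>UNIV. \<Sum>x'\<in>UNIV. \<Sum>y'\<in>UNIV. g x y x' y') =
   (\<Sum>x\<in>UNIV. \<Sum>x'\<in>UNIV. \<Sum>y\<in>UNIV. \<Sum>y'\<in>UNIV. (g x y x' y' :: real))"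
  by (rule sum.cong[OF refl], rule sum.swap)

lemma sum4_swapY:
  "(\<Sum>x\<in>UNIV. \<Sum>y\<in>UNIV. \<Sum>x'\<in>UNIV. \<Sum>y'\<in>UNIV. g x y x' y') =
   (\<Sum>y\<in>UNIV. \<Sum>y'\<in>UNIV. \<Sum>x\<in>UNIV. \<Sum>x'\<in>UNIV. (g x y x' y' :: real))"
proof -
  have "(\<Sum>x\<in>UNIV. \<Sum>y\<in>UNIV. \<Sum>x'\<in>UNIV. \<Sum>y'\<in>UNIV. g x y x' y') =
        (\<Sum>y\<in>UNIV. \<Sum>x\<in>UNIV. \<Sum>x'\<in>UNIV. \<Sum>y'\<in>UNIV. g x y x' y')"
    by (rule sum.swap)
  also have "\<dots> = (\<Sum>y\<in>UNIV. \<Sum>x\<in>UNIV. \<Sum>y'\<in>UNIV. \<Sum>x'\<in>UNIV. g x y x' y')"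
    by (intro sum.cong refl) (rule sum.swap)
  also have "\<dots> = (\<Sum>y\<in>UNIV. \<Sum>y'\<in>UNIV. \<Sum>x\<in>UNIV. \<Sum>x'\<in>UNIV. g x y x' y')"
    by (intro sum.cong refl) (rule sum.swap)
  finally show ?thesis .
qed

lemma ln_diff_less:
  fixes x y :: real
  assumes "0 < x" "0 < y" "x \<noteq> y"
  shows "ln x - ln y < (x - y) / y"
proof -
  have t: "0 < x / y" "x / y \<noteq> 1" using assms by auto
  have "ln (x / y) \<le> x / y - 1" by (rule ln_le_minus_one[OF t(1)])
  moreover have "ln (x / y) \<noteq> x / y - 1" using ln_eq_minus_one[OF t(1)] t(2) by blast
  ultimately have "ln (x / y) < x / y - 1" by simp
  moreover have "ln (x / y) = ln x - ln y" using assms by (simp add: ln_div)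
  moreover have "x / y - 1 = (x - y) / y" using assms by (simp add: field_simps)
  ultimately show ?thesis by simp
qed

lemma key_ineq:
  fixes P Q :: "'e::finite \<Rightarrow> 'e \<Rightarrow> real" and R :: "('e \<times> 'e) \<Rightarrow> ('e \<times> 'e) \<Rightarrow> real"
    and pi F rs :: "'e \<times> 'e \<Rightarrow> real" and \<theta> :: real
  assumes Rnn: "\<And>u v. R u v \<ge> 0"
    and Rrow: "\<And>u. (\<Sum>v\<in>UNIV. R u v) = 1"
    and inv: "\<And>v. (\<Sum>u\<in>UNIV. pi u * R u v) = pi v"
    and pipos: "\<And>u. pi u > 0"
    and pisum: "(\<Sum>u\<in>UNIV. pi u) = 1"
    and Rpos: "\<And>x y x' y'. R (x, y) (x', y') > 0 \<longleftrightarrow> P x x' > 0 \<and> Q y y' > 0"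
    and th: "\<theta> > 0"
    and Fid: "\<And>u v. R u v > 0 \<Longrightarrow> \<theta> * F v = ln (R u v) - ln (P (fst u) (fst v)) - ln (Q (snd u) (snd v)) + ln (rs u) - ln (rs v)"
    and notprod: "\<And>KX KY. \<exists>u v. R u v \<noteq> KX (fst u) (fst v) * KY (snd u) (snd v)"
  shows "(\<Sum>x\<in>UNIV. \<Sum>y\<in>UNIV. (\<Sum>y'\<in>UNIV. pi (x, y')) * (\<Sum>x'\<in>UNIV. pi (x', y)) * F (x, y))
         < (\<Sum>u\<in>UNIV. pi u * F u)"
proof -
  define p1 where "p1 x = (\<Sum>y\<in>UNIV. pi (x, y))" for x
  define p2 where "p2 y = (\<Sum>x\<in>UNIV. pi (x, y))" for y
  define rX where "rX x x' = (\<Sum>y\<in>UNIV. \<Sum>y'\<in>UNIV. pi (x, y) * R (x, y) (x', y'))" for x x'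
  define rY where "rY y y' = (\<Sum>x\<in>UNIV. \<Sum>x'\<in>UNIV. pi (x, y) * R (x, y) (x', y'))" for y y'
  define KX where "KX x x' = rX x x' / p1 x" for x x'
  define KY where "KY y y' = rY y y' / p2 y" for y y'
  define K where "K u v = KX (fst u) (fst v) * KY (snd u) (snd v)" for u v
  define e where "e u v = rX (fst u) (fst v) * rY (snd u) (snd v)" for u v
  define m where "m u = p1 (fst u) * p2 (snd u)" for u
  define nu where "nu u v = pi u * R u v" for u v
  have p1pos: "p1 x > 0" for x unfolding p1_def by (intro sum_pos) (auto intro: pipos)
  have p2pos: "p2 y > 0" for y unfolding p2_def by (intro sum_pos) (auto intro: pipos)
  have pinn: "pi u \<ge> 0" for u using pipos[of u] by simp
  have rXnn: "rX x x' \<ge> 0" for x x' unfolding rX_def using pinn Rnn by (intro sum_nonneg mult_nonneg_nonneg) auto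
  have rYnn: "rY y y' \<ge> 0" for y y' unfolding rY_def using pinn Rnn by (intro sum_nonneg mult_nonneg_nonneg) auto
  have Rrow2: "(\<Sum>x'\<in>UNIV. \<Sum>y'\<in>UNIV. R u (x', y')) = 1" for u using Rrow[of u] by (simp add: sum_pair_UNIV)
  have Rrow3: "(\<Sum>y'\<in>UNIV. \<Sum>x'\<in>UNIV. R u (x', y')) = 1" for u
  proof -
    have "(\<Sum>y'\<in>UNIV. \<Sum>x'\<in>UNIV. R u (x', y')) = (\<Sum>x'\<in>UNIV. \<Sum>y'\<in>UNIV. R u (x', y'))"
      by (rule sum.swap)
    then show ?thesis using Rrow2[of u] by simp
  qed
  have inv2: "(\<Sum>x\<in>UNIV. \<Sum>y\<in>UNIV. pi (x, y) * R (x, y) v) = pi v" for v using inv[of v] by (simp add: sum_pair_UNIV)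
  have rowX: "(\<Sum>x'\<in>UNIV. rX x x') = p1 x" for x
  proof -
    have "(\<Sum>x'\<in>UNIV. rX x x') = (\<Sum>y\<in>UNIV. \<Sum>x'\<in>UNIV. \<Sum>y'\<in>UNIV. pi (x, y) * R (x, y) (x', y'))"
      unfolding rX_def by (rule sum.swap)
    also have "\<dots> = (\<Sum>y\<in>UNIV. pi (x, y) * (\<Sum>x'\<in>UNIV. \<Sum>y'\<in>UNIV. R (x, y) (x', y')))"
      by (simp add: sum_distrib_left)
    also have "\<dots> = p1 x" by (simp add: Rrow2 p1_def)
    finally show ?thesis .
  qed
  have rowY: "(\<Sum>y'\<in>UNIV. rY y y') = p2 y" for y
  proof -
    have "(\<Sum>y'\<in>UNIV. rY y y') = (\<Sum>x\<in>UNIV. \<Sum>y'\<in>UNIV. \<Sum>x'\<in>UNIV. pi (x, y) * R (x, y) (x', y'))"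
      unfolding rY_def by (rule sum.swap)
    also have "\<dots> = (\<Sum>x\<in>UNIV. pi (x, y) * (\<Sum>y'\<in>UNIV. \<Sum>x'\<in>UNIV. R (x, y) (x', y')))"
      by (simp add: sum_distrib_left)
    also have "\<dots> = p2 y" by (simp add: Rrow3 p2_def)
    finally show ?thesis .
  qed
  have colX: "(\<Sum>x\<in>UNIV. rX x x') = p1 x'" for x'
  proof -
    have "(\<Sum>x\<in>UNIV. rX x x') = (\<Sum>y'\<in>UNIV. \<Sum>x\<in>UNIV. \<Sum>y\<in>UNIV. pi (x, y) * R (x, y) (x', y'))"
      unfolding rX_def
    proof -
      have "(\<Sum>x\<in>UNIV. \<Sum>y\<in>UNIV. \<Sum>y'\<in>UNIV. pi (x, y) * R (x, y) (x', y'))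
          = (\<Sum>x\<in>UNIV. \<Sum>y'\<in>UNIV. \<Sum>y\<in>UNIV. pi (x, y) * R (x, y) (x', y'))"
        by (rule sum.cong[OF refl], rule sum.swap)
      also have "\<dots> = (\<Sum>y'\<in>UNIV. \<Sum>x\<in>UNIV. \<Sum>y\<in>UNIV. pi (x, y) * R (x, y) (x', y'))"
        by (rule sum.swap)
      finally show "(\<Sum>x\<in>UNIV. \<Sum>y\<in>UNIV. \<Sum>y'\<in>UNIV. pi (x, y) * R (x, y) (x', y'))
          = (\<Sum>y'\<in>UNIV. \<Sum>x\<in>UNIV. \<Sum>y\<in>UNIV. pi (x, y) * R (x, y) (x', y'))" .
    qed
    also have "\<dots> = p1 x'" by (simp add: inv2 p1_def)
    finally show ?thesis .
  qed
  have colY: "(\<Sum>y\<in>UNIV. rY y y') = p2 y'" for y'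
  proof -
    have "(\<Sum>y\<in>UNIV. rY y y') = (\<Sum>x'\<in>UNIV. \<Sum>x\<in>UNIV. \<Sum>y\<in>UNIV. pi (x, y) * R (x, y) (x', y'))"
      unfolding rY_def
    proof -
      have "(\<Sum>y\<in>UNIV. \<Sum>x\<in>UNIV. \<Sum>x'\<in>UNIV. pi (x, y) * R (x, y) (x', y'))
          = (\<Sum>y\<in>UNIV. \<Sum>x'\<in>UNIV. \<Sum>x\<in>UNIV. pi (x, y) * R (x, y) (x', y'))"
        by (rule sum.cong[OF refl], rule sum.swap)
      also have "\<dots> = (\<Sum>x'\<in>UNIV. \<Sum>y\<in>UNIV. \<Sum>x\<in>UNIV. pi (x, y) * R (x, y) (x', y'))"
        by (rule sum.swap)
      also have "\<dots> = (\<Sum>x'\<in>UNIV. \<Sum>x\<in>UNIV. \<Sum>y\<in>UNIV. pi (x, y) * R (x, y) (x', y'))"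
        by (rule sum.cong[OF refl], rule sum.swap)
      finally show "(\<Sum>y\<in>UNIV. \<Sum>x\<in>UNIV. \<Sum>x'\<in>UNIV. pi (x, y) * R (x, y) (x', y'))
          = (\<Sum>x'\<in>UNIV. \<Sum>x\<in>UNIV. \<Sum>y\<in>UNIV. pi (x, y) * R (x, y) (x', y'))" .
    qed
    also have "\<dots> = p2 y'" by (simp add: inv2 p2_def)
    finally show ?thesis .
  qed
  have p1sum: "(\<Sum>x\<in>UNIV. p1 x) = 1" using pisum unfolding p1_def by (simp add: sum_pair_UNIV)
  have p2sum: "(\<Sum>y\<in>UNIV. p2 y) = 1"
  proof -
    have "(\<Sum>y\<in>UNIV. p2 y) = (\<Sum>x\<in>UNIV. \<Sum>y\<in>UNIV. pi (x, y))" unfolding p2_def by (rule sum.swap)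
    then show ?thesis using pisum by (simp add: sum_pair_UNIV)
  qed
  have rYtot: "(\<Sum>y\<in>UNIV. \<Sum>y'\<in>UNIV. rY y y') = 1" using rowY p2sum by simp
  have rXtot: "(\<Sum>x\<in>UNIV. \<Sum>x'\<in>UNIV. rX x x') = 1" using rowX p1sum by simp
  have rXge: "rX x x' \<ge> pi (x, y) * R (x, y) (x', y')" for x x' y y'
  proof -
    have "pi (x, y) * R (x, y) (x', y') \<le> (\<Sum>y'\<in>UNIV. pi (x, y) * R (x, y) (x', y'))"
      by (rule member_le_sum) (auto intro: mult_nonneg_nonneg pinn Rnn)
    also have "\<dots> \<le> rX x x'" unfolding rX_def
      by (rule member_le_sum) (auto intro!: sum_nonneg mult_nonneg_nonneg pinn Rnn)
    finally show ?thesis .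
  qed
  have rYge: "rY y y' \<ge> pi (x, y) * R (x, y) (x', y')" for x x' y y'
  proof -
    have "pi (x, y) * R (x, y) (x', y') \<le> (\<Sum>x'\<in>UNIV. pi (x, y) * R (x, y) (x', y'))"
      by (rule member_le_sum) (auto intro: mult_nonneg_nonneg pinn Rnn)
    also have "\<dots> \<le> rY y y'" unfolding rY_def
      by (rule member_le_sum) (auto intro!: sum_nonneg mult_nonneg_nonneg pinn Rnn)
    finally show ?thesis .
  qed
  have KXpos: "KX x x' > 0" if "R (x, y) (x', y') > 0" for x x' y y'
  proof -
    have "pi (x, y) * R (x, y) (x', y') > 0" using that pipos by simp
    then have "rX x x' > 0" using rXge[of x y x' y'] by linarith
    then show ?thesis unfolding KX_def using p1pos by simp
  qed
  have KYpos: "KY y y' > 0" if "R (x, y) (x', y') > 0" for x x' y y'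
  proof -
    have "pi (x, y) * R (x, y) (x', y') > 0" using that pipos by simp
    then have "rY y y' > 0" using rYge[of x y x' y'] by linarith
    then show ?thesis unfolding KY_def using p2pos by simp
  qed
  have KXnn: "KX x x' \<ge> 0" for x x' unfolding KX_def using rXnn p1pos by (simp add: less_imp_le)
  have KYnn: "KY y y' \<ge> 0" for y y' unfolding KY_def using rYnn p2pos by (simp add: less_imp_le)
  have Knn: "K u v \<ge> 0" for u v unfolding K_def using KXnn KYnn by simp
  have RposK: "K u v > 0" if "R u v > 0" for u v
    using that KXpos[of "fst u" "snd u" "fst v" "snd v"] KYpos[of "fst u" "snd u" "fst v" "snd v"]
    unfolding K_def by simp
  have rXP: "P x x' > 0" if "rX x x' > 0" for x x'
  proof (rule ccontr)
    assume "\<not> P x x' > 0"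
    then have "\<And>y y'. R (x, y) (x', y') = 0" using Rpos Rnn by (metis less_eq_real_def)
    then have "rX x x' = 0" unfolding rX_def by simp
    then show False using that by simp
  qed
  have rYQ: "Q y y' > 0" if "rY y y' > 0" for y y'
  proof (rule ccontr)
    assume "\<not> Q y y' > 0"
    then have "\<And>x x'. R (x, y) (x', y') = 0" using Rpos Rnn by (metis less_eq_real_def)
    then have "rY y y' = 0" unfolding rY_def by simp
    then show False using that by simp
  qed
  have KposR: "R u v > 0" if "K u v > 0" for u v
  proof -
    obtain x y where u: "u = (x, y)" by (cases u)
    obtain x' y' where v: "v = (x', y')" by (cases v)
    have "KX x x' \<noteq> 0" "KY y y' \<noteq> 0" using that unfolding K_def u v by auto
    then have "rX x x' > 0" "rY y y' > 0" using rXnn rYnn unfolding KX_def KY_def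
      by (auto simp: less_eq_real_def)
    then have "P x x' > 0" "Q y y' > 0" using rXP rYQ by auto
    then show ?thesis unfolding u v using Rpos by simp
  qed
  have KXrow: "(\<Sum>x'\<in>UNIV. KX x x') = 1" for x
    unfolding KX_def using rowX[of x] p1pos[of x] by (simp add: sum_divide_distrib[symmetric])
  have KYrow: "(\<Sum>y'\<in>UNIV. KY y y') = 1" for y
    unfolding KY_def using rowY[of y] p2pos[of y] by (simp add: sum_divide_distrib[symmetric])
  have Krow: "(\<Sum>v\<in>UNIV. K u v) = 1" for u
  proof -
    have "(\<Sum>v\<in>UNIV. K u v) = (\<Sum>x'\<in>UNIV. KX (fst u) x') * (\<Sum>y'\<in>UNIV. KY (snd u) y')"
      unfolding K_def by (simp add: sum_pair_UNIV sum_product)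
    then show ?thesis using KXrow KYrow by simp
  qed
  have eK: "e u v = m u * K u v" for u v
  proof -
    have "p1 (fst u) \<noteq> 0" "p2 (snd u) \<noteq> 0" using p1pos[of "fst u"] p2pos[of "snd u"] by auto
    then show ?thesis unfolding e_def m_def K_def KX_def KY_def by (simp add: field_simps)
  qed
  have mpos: "m u > 0" for u unfolding m_def using p1pos p2pos by simp
  have erow: "(\<Sum>v\<in>UNIV. e u v) = m u" for u using Krow by (simp add: eK sum_distrib_left[symmetric])
  have ecol: "(\<Sum>u\<in>UNIV. e u v) = m v" for v
  proof -
    have "(\<Sum>u\<in>UNIV. e u v) = (\<Sum>x\<in>UNIV. rX x (fst v)) * (\<Sum>y\<in>UNIV. rY y (snd v))"
      unfolding e_def by (simp add: sum_pair_UNIV sum_product)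
    then show ?thesis using colX colY unfolding m_def by simp
  qed
  have M_nuX: "(\<Sum>u\<in>UNIV. \<Sum>v\<in>UNIV. nu u v * h (fst u) (fst v)) = (\<Sum>x\<in>UNIV. \<Sum>x'\<in>UNIV. rX x x' * h x x')" for h
  proof -
    have "(\<Sum>u\<in>UNIV. \<Sum>v\<in>UNIV. nu u v * h (fst u) (fst v))
        = (\<Sum>x\<in>UNIV. \<Sum>y\<in>UNIV. \<Sum>x'\<in>UNIV. \<Sum>y'\<in>UNIV. pi (x, y) * R (x, y) (x', y') * h x x')"
      by (simp add: sum_pair_UNIV nu_def)
    also have "\<dots> = (\<Sum>x\<in>UNIV. \<Sum>x'\<in>UNIV. \<Sum>y\<in>UNIV. \<Sum>y'\<in>UNIV. pi (x, y) * R (x, y) (x', y') * h x x')"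
      by (rule sum4_swapX)
    also have "\<dots> = (\<Sum>x\<in>UNIV. \<Sum>x'\<in>UNIV. rX x x' * h x x')"
      by (simp add: rX_def sum_distrib_right)
    finally show ?thesis .
  qed
  have M_nuY: "(\<Sum>u\<in>UNIV. \<Sum>v\<in>UNIV. nu u v * h (snd u) (snd v)) = (\<Sum>y\<in>UNIV. \<Sum>y'\<in>UNIV. rY y y' * h y y')" for h
  proof -
    have "(\<Sum>u\<in>UNIV. \<Sum>v\<in>UNIV. nu u v * h (snd u) (snd v))
        = (\<Sum>x\<in>UNIV. \<Sum>y\<in>UNIV. \<Sum>x'\<in>UNIV. \<Sum>y'\<in>UNIV. pi (x, y) * R (x, y) (x', y') * h y y')"
      by (simp add: sum_pair_UNIV nu_def)
    also have "\<dots> = (\<Sum>y\<in>UNIV. \<Sum>y'\<in>UNIV. \<Sum>x\<in>UNIV. \<Sum>x'\<in>UNIV. pi (x, y) * R (x, y) (x', y') * h y y')"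
      by (rule sum4_swapY)
    also have "\<dots> = (\<Sum>y\<in>UNIV. \<Sum>y'\<in>UNIV. rY y y' * h y y')"
      by (simp add: rY_def sum_distrib_right)
    finally show ?thesis .
  qed
  have M_eX: "(\<Sum>u\<in>UNIV. \<Sum>v\<in>UNIV. e u v * h (fst u) (fst v)) = (\<Sum>x\<in>UNIV. \<Sum>x'\<in>UNIV. rX x x' * h x x')" for h
  proof -
    have "(\<Sum>u\<in>UNIV. \<Sum>v\<in>UNIV. e u v * h (fst u) (fst v))
        = (\<Sum>x\<in>UNIV. \<Sum>y\<in>UNIV. \<Sum>x'\<in>UNIV. \<Sum>y'\<in>UNIV. rX x x' * rY y y' * h x x')"
      by (simp add: sum_pair_UNIV e_def)
    also have "\<dots> = (\<Sum>x\<in>UNIV. \<Sum>x'\<in>UNIV. \<Sum>y\<in>UNIV. \<Sum>y'\<in>UNIV. rX x x' * rY y y' * h x x')"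
      by (rule sum4_swapX)
    also have "\<dots> = (\<Sum>x\<in>UNIV. \<Sum>x'\<in>UNIV. rX x x' * h x x' * (\<Sum>y\<in>UNIV. \<Sum>y'\<in>UNIV. rY y y'))"
      by (simp add: sum_distrib_left mult_ac)
    finally show ?thesis using rYtot by simp
  qed
  have M_eY: "(\<Sum>u\<in>UNIV. \<Sum>v\<in>UNIV. e u v * h (snd u) (snd v)) = (\<Sum>y\<in>UNIV. \<Sum>y'\<in>UNIV. rY y y' * h y y')" for h
  proof -
    have "(\<Sum>u\<in>UNIV. \<Sum>v\<in>UNIV. e u v * h (snd u) (snd v))
        = (\<Sum>x\<in>UNIV. \<Sum>y\<in>UNIV. \<Sum>x'\<in>UNIV. \<Sum>y'\<in>UNIV. rX x x' * rY y y' * h y y')"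
      by (simp add: sum_pair_UNIV e_def)
    also have "\<dots> = (\<Sum>y\<in>UNIV. \<Sum>y'\<in>UNIV. \<Sum>x\<in>UNIV. \<Sum>x'\<in>UNIV. rX x x' * rY y y' * h y y')"
      by (rule sum4_swapY)
    also have "\<dots> = (\<Sum>y\<in>UNIV. \<Sum>y'\<in>UNIV. rY y y' * h y y' * (\<Sum>x\<in>UNIV. \<Sum>x'\<in>UNIV. rX x x'))"
      by (simp add: sum_distrib_left mult_ac)
    finally show ?thesis using rXtot by simp
  qed
  have M_nu1: "(\<Sum>u\<in>UNIV. \<Sum>v\<in>UNIV. nu u v * h u) = (\<Sum>u\<in>UNIV. pi u * h u)" for h
  proof -
    have "(\<Sum>u\<in>UNIV. \<Sum>v\<in>UNIV. nu u v * h u) = (\<Sum>u\<in>UNIV. pi u * h u * (\<Sum>v\<in>UNIV. R u v))"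
      by (simp add: nu_def sum_distrib_left mult_ac)
    then show ?thesis using Rrow by simp
  qed
  have M_nu2: "(\<Sum>u\<in>UNIV. \<Sum>v\<in>UNIV. nu u v * h v) = (\<Sum>v\<in>UNIV. pi v * h v)" for h
  proof -
    have "(\<Sum>u\<in>UNIV. \<Sum>v\<in>UNIV. nu u v * h v) = (\<Sum>v\<in>UNIV. \<Sum>u\<in>UNIV. nu u v * h v)"
      by (rule sum.swap)
    also have "\<dots> = (\<Sum>v\<in>UNIV. (\<Sum>u\<in>UNIV. pi u * R u v) * h v)"
      by (simp add: nu_def sum_distrib_right)
    finally show ?thesis using inv by simp
  qed
  have M_e1: "(\<Sum>u\<in>UNIV. \<Sum>v\<in>UNIV. e u v * h u) = (\<Sum>u\<in>UNIV. m u * h u)" for h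
  proof -
    have "(\<Sum>u\<in>UNIV. \<Sum>v\<in>UNIV. e u v * h u) = (\<Sum>u\<in>UNIV. (\<Sum>v\<in>UNIV. e u v) * h u)"
      by (simp add: sum_distrib_right)
    then show ?thesis using erow by simp
  qed
  have M_e2: "(\<Sum>u\<in>UNIV. \<Sum>v\<in>UNIV. e u v * h v) = (\<Sum>v\<in>UNIV. m v * h v)" for h
  proof -
    have "(\<Sum>u\<in>UNIV. \<Sum>v\<in>UNIV. e u v * h v) = (\<Sum>v\<in>UNIV. \<Sum>u\<in>UNIV. e u v * h v)"
      by (rule sum.swap)
    also have "\<dots> = (\<Sum>v\<in>UNIV. (\<Sum>u\<in>UNIV. e u v) * h v)"
      by (simp add: sum_distrib_right)
    finally show ?thesis using ecol by simp
  qed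
  define G where "G u v = ln (R u v) - ln (P (fst u) (fst v)) - ln (Q (snd u) (snd v)) + ln (rs u) - ln (rs v)" for u v
  define L where "L = (\<Sum>x\<in>UNIV. \<Sum>y\<in>UNIV. (\<Sum>y'\<in>UNIV. pi (x, y')) * (\<Sum>x'\<in>UNIV. pi (x', y)) * F (x, y))"
  have Rz: "R u v = 0" if "\<not> R u v > 0" for u v using that Rnn[of u v] by simp
  have Kz: "K u v = 0" if "\<not> K u v > 0" for u v using that Knn[of u v] by simp
  have A: "\<theta> * (\<Sum>u\<in>UNIV. pi u * F u) = (\<Sum>u\<in>UNIV. \<Sum>v\<in>UNIV. nu u v * G u v)"
  proof -
    have "\<theta> * (\<Sum>u\<in>UNIV. pi u * F u) = (\<Sum>v\<in>UNIV. pi v * (\<theta> * F v))"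
      by (simp add: sum_distrib_left mult_ac)
    also have "\<dots> = (\<Sum>u\<in>UNIV. \<Sum>v\<in>UNIV. nu u v * (\<theta> * F v))"
      by (rule M_nu2[of "\<lambda>v. \<theta> * F v", symmetric])
    also have "\<dots> = (\<Sum>u\<in>UNIV. \<Sum>v\<in>UNIV. nu u v * G u v)"
    proof (intro sum.cong refl)
      fix u v show "nu u v * (\<theta> * F v) = nu u v * G u v"
      proof (cases "R u v > 0")
        case True then show ?thesis using Fid[OF True] unfolding G_def by simp
      next
        case False then show ?thesis using Rz[OF False] unfolding nu_def by simp
      qed
    qed
    finally show ?thesis .
  qed
  have B: "\<theta> * L = (\<Sum>u\<in>UNIV. \<Sum>v\<in>UNIV. e u v * G u v)"
  proof -
    have "\<theta> * L = (\<Sum>v\<in>UNIV. m v * (\<theta> * F v))"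
      unfolding L_def m_def p1_def p2_def by (simp add: sum_pair_UNIV sum_distrib_left mult_ac)
    also have "\<dots> = (\<Sum>u\<in>UNIV. \<Sum>v\<in>UNIV. e u v * (\<theta> * F v))"
      by (rule M_e2[of "\<lambda>v. \<theta> * F v", symmetric])
    also have "\<dots> = (\<Sum>u\<in>UNIV. \<Sum>v\<in>UNIV. e u v * G u v)"
    proof (intro sum.cong refl)
      fix u v show "e u v * (\<theta> * F v) = e u v * G u v"
      proof (cases "K u v > 0")
        case True then show ?thesis using Fid[OF KposR[OF True]] unfolding G_def by simp
      next
        case False then show ?thesis using Kz[OF False] unfolding eK by simp
      qed
    qed
    finally show ?thesis .
  qed
  have Csplit: "(\<Sum>u\<in>UNIV. \<Sum>v\<in>UNIV. w u v * G u v) =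
      (\<Sum>u\<in>UNIV. \<Sum>v\<in>UNIV. w u v * ln (R u v))
      - (\<Sum>u\<in>UNIV. \<Sum>v\<in>UNIV. w u v * (\<lambda>a b. ln (P a b)) (fst u) (fst v))
      - (\<Sum>u\<in>UNIV. \<Sum>v\<in>UNIV. w u v * (\<lambda>a b. ln (Q a b)) (snd u) (snd v))
      + (\<Sum>u\<in>UNIV. \<Sum>v\<in>UNIV. w u v * (\<lambda>u. ln (rs u)) u)
      - (\<Sum>u\<in>UNIV. \<Sum>v\<in>UNIV. w u v * (\<lambda>u. ln (rs u)) v)" for w
  proof -
    have "(\<Sum>u\<in>UNIV. \<Sum>v\<in>UNIV. w u v * G u v) =
      (\<Sum>u\<in>UNIV. \<Sum>v\<in>UNIV. w u v * ln (R u v) - w u v * ln (P (fst u) (fst v))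
         - w u v * ln (Q (snd u) (snd v)) + w u v * ln (rs u) - w u v * ln (rs v))"
      by (intro sum.cong refl) (simp add: G_def algebra_simps)
    then show ?thesis by (simp add: sum.distrib sum_subtractf)
  qed
  have AB: "\<theta> * (\<Sum>u\<in>UNIV. pi u * F u) - \<theta> * L =
      (\<Sum>u\<in>UNIV. \<Sum>v\<in>UNIV. nu u v * ln (R u v)) - (\<Sum>u\<in>UNIV. \<Sum>v\<in>UNIV. e u v * ln (R u v))"
    unfolding A B Csplit M_nuX[of "\<lambda>a b. ln (P a b)"] M_nuY[of "\<lambda>a b. ln (Q a b)"]
      M_eX[of "\<lambda>a b. ln (P a b)"] M_eY[of "\<lambda>a b. ln (Q a b)"]
      M_nu1[of "\<lambda>u. ln (rs u)"] M_nu2[of "\<lambda>u. ln (rs u)"] M_e1[of "\<lambda>u. ln (rs u)"] M_e2[of "\<lambda>u. ln (rs u)"]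
    by simp
  have g1: "nu u v * (ln (K u v) - ln (R u v)) \<le> pi u * (K u v - R u v)" for u v
  proof (cases "R u v > 0")
    case True
    have Kp: "K u v > 0" by (rule RposK[OF True])
    have "ln (K u v) - ln (R u v) \<le> (K u v - R u v) / R u v" by (rule ln_diff_le[OF Kp True])
    then have "nu u v * (ln (K u v) - ln (R u v)) \<le> nu u v * ((K u v - R u v) / R u v)"
      unfolding nu_def using pinn True by (intro mult_left_mono) auto
    also have "\<dots> = pi u * (K u v - R u v)" unfolding nu_def using True by simp
    finally show ?thesis .
  next
    case False
    then show ?thesis using Rz[OF False] pinn[of u] Knn[of u v] unfolding nu_def by simp
  qed
  have rowdiff: "(\<Sum>v\<in>UNIV. c * (K u v - R u v)) = 0" for u c
    using Krow[of u] Rrow[of u] by (simp add: sum_distrib_left[symmetric] sum_subtractf)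
  have rowdiff2: "(\<Sum>v\<in>UNIV. c * (R u v - K u v)) = 0" for u c
    using Krow[of u] Rrow[of u] by (simp add: sum_distrib_left[symmetric] sum_subtractf)
  have G1: "(\<Sum>u\<in>UNIV. \<Sum>v\<in>UNIV. nu u v * ln (K u v)) \<le> (\<Sum>u\<in>UNIV. \<Sum>v\<in>UNIV. nu u v * ln (R u v))"
  proof -
    have "(\<Sum>u\<in>UNIV. \<Sum>v\<in>UNIV. nu u v * (ln (K u v) - ln (R u v))) \<le> (\<Sum>u\<in>UNIV. \<Sum>v\<in>UNIV. pi u * (K u v - R u v))"
      by (intro sum_mono g1)
    also have "\<dots> = 0" by (simp add: rowdiff)
    finally show ?thesis by (simp add: right_diff_distrib sum_subtractf)
  qed
  have g2: "e u v * (ln (R u v) - ln (K u v)) \<le> m u * (R u v - K u v) \<and>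
            (R u v \<noteq> K u v \<longrightarrow> e u v * (ln (R u v) - ln (K u v)) < m u * (R u v - K u v))" for u v
  proof (cases "K u v > 0")
    case True
    have Rp: "R u v > 0" by (rule KposR[OF True])
    have mK: "m u * K u v > 0" using mpos True by simp
    show ?thesis
    proof (cases "R u v = K u v")
      case True then show ?thesis by simp
    next
      case False
      have "ln (R u v) - ln (K u v) < (R u v - K u v) / K u v"
        by (rule ln_diff_less[OF Rp \<open>K u v > 0\<close> False])
      then have "e u v * (ln (R u v) - ln (K u v)) < (m u * K u v) * ((R u v - K u v) / K u v)"
        unfolding eK using mK by (intro mult_strict_left_mono) auto
      also have "\<dots> = m u * (R u v - K u v)" using True by simp
      finally show ?thesis using False by simp
    qed
  next
    case False
    have K0: "K u v = 0" by (rule Kz[OF False])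
    show ?thesis
    proof (cases "R u v = 0")
      case True then show ?thesis using K0 by (simp add: eK)
    next
      case False
      then have "R u v > 0" using Rnn[of u v] by simp
      then show ?thesis using K0 mpos[of u] by (simp add: eK)
    qed
  qed
  obtain u0 v0 where uv0: "R u0 v0 \<noteq> K u0 v0" using notprod[of KX KY] unfolding K_def by blast
  have G2: "(\<Sum>u\<in>UNIV. \<Sum>v\<in>UNIV. e u v * ln (R u v)) < (\<Sum>u\<in>UNIV. \<Sum>v\<in>UNIV. e u v * ln (K u v))"
  proof -
    have "(\<Sum>u\<in>UNIV. \<Sum>v\<in>UNIV. e u v * (ln (R u v) - ln (K u v))) < (\<Sum>u\<in>UNIV. \<Sum>v\<in>UNIV. m u * (R u v - K u v))"
    proof (rule sum_strict_mono_ex1)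
      show "\<forall>u\<in>UNIV. (\<Sum>v\<in>UNIV. e u v * (ln (R u v) - ln (K u v))) \<le> (\<Sum>v\<in>UNIV. m u * (R u v - K u v))"
        using g2 by (intro ballI sum_mono) blast
      have "(\<Sum>v\<in>UNIV. e u0 v * (ln (R u0 v) - ln (K u0 v))) < (\<Sum>v\<in>UNIV. m u0 * (R u0 v - K u0 v))"
      proof (rule sum_strict_mono_ex1)
        show "\<forall>v\<in>UNIV. e u0 v * (ln (R u0 v) - ln (K u0 v)) \<le> m u0 * (R u0 v - K u0 v)"
          using g2 by blast
        show "\<exists>v\<in>UNIV. e u0 v * (ln (R u0 v) - ln (K u0 v)) < m u0 * (R u0 v - K u0 v)"
          using g2[of u0 v0] uv0 by blast
      qed simp
      then show "\<exists>u\<in>UNIV. (\<Sum>v\<in>UNIV. e u v * (ln (R u v) - ln (K u v))) < (\<Sum>v\<in>UNIV. m u * (R u v - K u v))"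
        by blast
    qed simp
    also have "\<dots> = 0" by (simp add: rowdiff2)
    finally show ?thesis by (simp add: right_diff_distrib sum_subtractf)
  qed
  have lnK: "ln (K u v) = ln (KX (fst u) (fst v)) + ln (KY (snd u) (snd v))" if "K u v > 0" for u v
  proof -
    have "KX (fst u) (fst v) \<noteq> 0" "KY (snd u) (snd v) \<noteq> 0" using that unfolding K_def by auto
    then have "KX (fst u) (fst v) > 0" "KY (snd u) (snd v) > 0" using KXnn KYnn by (auto simp: less_eq_real_def)
    then show ?thesis unfolding K_def by (simp add: ln_mult)
  qed
  have E1: "(\<Sum>u\<in>UNIV. \<Sum>v\<in>UNIV. nu u v * ln (K u v)) =
      (\<Sum>u\<in>UNIV. \<Sum>v\<in>UNIV. nu u v * (\<lambda>a b. ln (KX a b)) (fst u) (fst v))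
      + (\<Sum>u\<in>UNIV. \<Sum>v\<in>UNIV. nu u v * (\<lambda>a b. ln (KY a b)) (snd u) (snd v))"
  proof -
    have "(\<Sum>u\<in>UNIV. \<Sum>v\<in>UNIV. nu u v * ln (K u v)) =
      (\<Sum>u\<in>UNIV. \<Sum>v\<in>UNIV. nu u v * ln (KX (fst u) (fst v)) + nu u v * ln (KY (snd u) (snd v)))"
    proof (intro sum.cong refl)
      fix u v show "nu u v * ln (K u v) = nu u v * ln (KX (fst u) (fst v)) + nu u v * ln (KY (snd u) (snd v))"
      proof (cases "R u v > 0")
        case True then show ?thesis using lnK[OF RposK[OF True]] by (simp add: algebra_simps)
      next
        case False then show ?thesis using Rz[OF False] unfolding nu_def by simp
      qed
    qed
    then show ?thesis by (simp add: sum.distrib)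
  qed
  have E2: "(\<Sum>u\<in>UNIV. \<Sum>v\<in>UNIV. e u v * ln (K u v)) =
      (\<Sum>u\<in>UNIV. \<Sum>v\<in>UNIV. e u v * (\<lambda>a b. ln (KX a b)) (fst u) (fst v))
      + (\<Sum>u\<in>UNIV. \<Sum>v\<in>UNIV. e u v * (\<lambda>a b. ln (KY a b)) (snd u) (snd v))"
  proof -
    have "(\<Sum>u\<in>UNIV. \<Sum>v\<in>UNIV. e u v * ln (K u v)) =
      (\<Sum>u\<in>UNIV. \<Sum>v\<in>UNIV. e u v * ln (KX (fst u) (fst v)) + e u v * ln (KY (snd u) (snd v)))"
    proof (intro sum.cong refl)
      fix u v show "e u v * ln (K u v) = e u v * ln (KX (fst u) (fst v)) + e u v * ln (KY (snd u) (snd v))"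
      proof (cases "K u v > 0")
        case True then show ?thesis using lnK[OF True] by (simp add: algebra_simps)
      next
        case False then show ?thesis using Kz[OF False] unfolding eK by simp
      qed
    qed
    then show ?thesis by (simp add: sum.distrib)
  qed
  have E: "(\<Sum>u\<in>UNIV. \<Sum>v\<in>UNIV. nu u v * ln (K u v)) = (\<Sum>u\<in>UNIV. \<Sum>v\<in>UNIV. e u v * ln (K u v))"
    unfolding E1 E2 M_nuX[of "\<lambda>a b. ln (KX a b)"] M_nuY[of "\<lambda>a b. ln (KY a b)"]
      M_eX[of "\<lambda>a b. ln (KX a b)"] M_eY[of "\<lambda>a b. ln (KY a b)"] ..
  have "\<theta> * (\<Sum>u\<in>UNIV. pi u * F u) - \<theta> * L > 0"
    unfolding AB using G1 G2 E by linarith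
  then have "\<theta> * (L - (\<Sum>u\<in>UNIV. pi u * F u)) < 0" by (simp add: algebra_simps)
  then have "L - (\<Sum>u\<in>UNIV. pi u * F u) < 0" using th by (simp add: mult_less_0_iff)
  then show ?thesis unfolding L_def by simp
qed

lemma ln4:
  fixes a b c d :: real
  assumes "0 < a" "0 < b" "0 < c" "0 < d"
  shows "ln (a * b * c * d) = ln a + ln b + ln c + ln d"
  using assms by (simp add: ln_mult)

lemma pos3:
  fixes g p q :: real
  assumes "0 < g" "0 \<le> p" "0 \<le> q"
  shows "0 < g * p * q \<longleftrightarrow> 0 < p \<and> 0 < q"
proof
  assume h: "0 < g * p * q"
  have "p \<noteq> 0" using h by auto
  moreover have "q \<noteq> 0" using h by auto
  ultimately show "0 < p \<and> 0 < q" using assms by auto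
next
  assume "0 < p \<and> 0 < q"
  then show "0 < g * p * q" using assms by simp
qed

theorem lemma5p9:
  fixes P Q :: "'e::finite \<Rightarrow> 'e \<Rightarrow> real"
    and piP piQ :: "'e \<Rightarrow> real"
    and f :: "'e \<Rightarrow> 'e \<Rightarrow> int"
    and \<theta>s :: real
    and rs pis :: "'e \<times> 'e \<Rightarrow> real"
  assumes P: "stochastic P" "irreducible_mat P" "aperiodic_mat P"
    and Q: "stochastic Q" "irreducible_mat Q" "aperiodic_mat Q"
    and piP: "invariant_prob P piP" and piQ: "invariant_prob Q piQ"
    and gcd_f: "Gcd (range (case_prod f)) = 1"
    and mu_neg: "(\<Sum>x\<in>UNIV. \<Sum>y\<in>UNIV. piP x * piQ y * of_int (f x y)) < 0"
    and C1: "cond_C1 P Q f"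
    and C2: "cond_C2 P Q f"
    and theta: "\<theta>s > 0" "spec_rad (Phi P Q f \<theta>s) = 1"
    and theta_unique: "\<And>\<theta>. \<theta> > 0 \<Longrightarrow> spec_rad (Phi P Q f \<theta>) = 1 \<Longrightarrow> \<theta> = \<theta>s"
    and rs: "\<forall>u. rs u > 0" "\<forall>u. (\<Sum>v\<in>UNIV. Phi P Q f \<theta>s u v * rs v) = rs u"
    and pis: "invariant_prob (Rstar P Q f \<theta>s rs) pis"
  shows "\<exists>L. (\<lambda>T. mu_star_T (Rstar P Q f \<theta>s rs) pis f T) \<longlonglongrightarrow> L
           \<and> L = (\<Sum>x\<in>UNIV. \<Sum>y\<in>UNIV. (\<Sum>y'\<in>UNIV. pis (x, y')) * (\<Sum>x'\<in>UNIV. pis (x', y)) * of_int (f x y))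
           \<and> L < (\<Sum>u\<in>UNIV. pis u * of_int (f (fst u) (snd u)))"
proof -
  define R where "R = Rstar P Q f \<theta>s rs"
  define g where "g u v = rs v / rs u * exp (\<theta>s * of_int (f (fst v) (snd v)))" for u v :: "'e \<times> 'e"
  have Pnn: "\<And>i j. P i j \<ge> 0" and Qnn: "\<And>i j. Q i j \<ge> 0"
    using P(1) Q(1) by (auto simp: stochastic_def)
  have rsp: "rs u > 0" for u using rs(1) by blast
  have gpos: "g u v > 0" for u v unfolding g_def using rsp by simp
  have Rform: "R (x, y) (x', y') = g (x, y) (x', y') * P x x' * Q y y'" for x y x' y'
    unfolding R_def g_def Rstar_def Phi_def by simp
  have Rnn: "R u v \<ge> 0" for u v
    using Rform[of "fst u" "snd u" "fst v" "snd v"] gpos[of u v] Pnn Qnn by simp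
  have Rrow: "(\<Sum>v\<in>UNIV. R u v) = 1" for u
  proof -
    have "(\<Sum>v\<in>UNIV. R u v) = (\<Sum>v\<in>UNIV. Phi P Q f \<theta>s u v * rs v) / rs u"
      unfolding R_def Rstar_def by (simp add: sum_divide_distrib mult_ac)
    also have "\<dots> = rs u / rs u" using rs(2) by (metis (no_types))
    also have "\<dots> = 1" using rsp[of u] by simp
    finally show ?thesis .
  qed
  have stR: "stochastic R" unfolding stochastic_def using Rnn Rrow by simp
  have invR: "invariant_prob R pis" using pis unfolding R_def .
  have pisnn: "pis u \<ge> 0" for u using invR unfolding invariant_prob_def by blast
  have pissum: "(\<Sum>u\<in>UNIV. pis u) = 1" using invR unfolding invariant_prob_def by blast
  have pisinv: "(\<Sum>u\<in>UNIV. pis u * R u v) = pis v" for v using invR unfolding invariant_prob_def by blast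
  obtain NP where NP: "\<And>n i j. n \<ge> NP \<Longrightarrow> mpow P n i j > 0" using primitive[OF P] by blast
  obtain NQ where NQ: "\<And>n i j. n \<ge> NQ \<Longrightarrow> mpow Q n i j > 0" using primitive[OF Q] by blast
  define m where "m = NP + NQ + 1"
  obtain c where c: "c > 0" "\<forall>z. c \<le> g (fst z) (snd z)"
    using finite_pos_lb[of "\<lambda>z. g (fst z) (snd z)"] gpos by blast
  have Rlb: "R (x, y) (x', y') \<ge> c * P x x' * Q y y'" for x y x' y'
  proof -
    have "c \<le> g (x, y) (x', y')" using c(2)[rule_format, of "((x, y), (x', y'))"] by simp
    then have "c * (P x x' * Q y y') \<le> g (x, y) (x', y') * (P x x' * Q y y')"
      using Pnn Qnn by (intro mult_right_mono) auto
    then show ?thesis unfolding Rform by (simp add: mult.assoc)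
  qed
  have Rmpos: "mpow R m u v > 0" for u v
  proof -
    obtain x y where u: "u = (x, y)" by (cases u)
    obtain x' y' where v: "v = (x', y')" by (cases v)
    have "mpow R m (x, y) (x', y') \<ge> c ^ m * mpow P m x x' * mpow Q m y y'"
      by (rule mpow_prod_lb[where R=R and P=P and Q=Q and c=c, OF less_imp_le[OF c(1)] Rlb Pnn Qnn])
    moreover have "c ^ m * mpow P m x x' * mpow Q m y y' > 0"
      using c(1) NP[of m x x'] NQ[of m y y'] unfolding m_def by simp
    ultimately show ?thesis unfolding u v by linarith
  qed
  have m1: "m \<ge> 1" unfolding m_def by simp
  have pispos: "pis v > 0" for v
  proof -
    have "\<exists>u. pis u > 0"
    proof (rule ccontr)
      assume a: "\<not> (\<exists>u. pis u > 0)"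
      have "pis u = 0" for u
      proof -
        have "\<not> pis u > 0" using a by blast
        then show ?thesis using pisnn[of u] by linarith
      qed
      then have "(\<Sum>u\<in>UNIV. pis u) = 0" by simp
      then show False using pissum by simp
    qed
    then obtain u where u: "pis u > 0" by blast
    have "pis u * mpow R m u v \<le> (\<Sum>w\<in>UNIV. pis w * mpow R m w v)"
      by (rule member_le_sum) (auto intro!: mult_nonneg_nonneg pisnn mpow_nonneg Rnn)
    also have "\<dots> = pis v" by (rule mpow_inv[OF invR])
    moreover have "pis u * mpow R m u v > 0" by (rule mult_pos_pos[OF u Rmpos])
    ultimately show ?thesis by linarith
  qed
  have Rpos: "R (x, y) (x', y') > 0 \<longleftrightarrow> P x x' > 0 \<and> Q y y' > 0" for x y x' y'
  proof -
    have "g (x, y) (x', y') > 0" by (rule gpos)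
    then show ?thesis unfolding Rform by (rule pos3[OF _ Pnn Qnn])
  qed
  define F where "F u = real_of_int (f (fst u) (snd u))" for u :: "'e \<times> 'e"
  have Fid: "\<theta>s * F v = ln (R u v) - ln (P (fst u) (fst v)) - ln (Q (snd u) (snd v)) + ln (rs u) - ln (rs v)"
    if Rp: "R u v > 0" for u v
  proof -
    obtain x y where u: "u = (x, y)" by (cases u)
    obtain x' y' where v: "v = (x', y')" by (cases v)
    have PQ: "P x x' > 0" "Q y y' > 0" using Rp Rpos unfolding u v by auto
    have "R u v = (rs v / rs u) * exp (\<theta>s * F v) * P x x' * Q y y'"
      unfolding u v Rform g_def F_def by simp
    moreover have "ln ((rs v / rs u) * exp (\<theta>s * F v) * P x x' * Q y y')
       = ln (rs v / rs u) + ln (exp (\<theta>s * F v)) + ln (P x x') + ln (Q y y')"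
      by (rule ln4) (use PQ rsp[of u] rsp[of v] in auto)
    ultimately have "ln (R u v) = ln (rs v / rs u) + ln (exp (\<theta>s * F v)) + ln (P x x') + ln (Q y y')"
      by simp
    also have "\<dots> = ln (rs v) - ln (rs u) + \<theta>s * F v + ln (P x x') + ln (Q y y')"
      using rsp[of u] rsp[of v] by (simp add: ln_div)
    finally show ?thesis unfolding u v by simp
  qed
  have notprod: "\<exists>u v. R u v \<noteq> KX (fst u) (fst v) * KY (snd u) (snd v)" for KX KY
  proof (rule ccontr)
    assume "\<not> (\<exists>u v. R u v \<noteq> KX (fst u) (fst v) * KY (snd u) (snd v))"
    then have H: "\<And>u v. Rstar P Q f \<theta>s rs u v = KX (fst u) (fst v) * KY (snd u) (snd v)"
      unfolding R_def by blast
    show False by (rule not_product[OF rs(1) theta(1) C2 H])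
  qed
  have ineq: "(\<Sum>x\<in>UNIV. \<Sum>y\<in>UNIV. (\<Sum>y'\<in>UNIV. pis (x, y')) * (\<Sum>x'\<in>UNIV. pis (x', y)) * F (x, y))
         < (\<Sum>u\<in>UNIV. pis u * F u)"
    by (rule key_ineq[OF Rnn Rrow pisinv pispos pissum Rpos theta(1) Fid notprod])
  define L where "L = (\<Sum>x\<in>UNIV. \<Sum>y\<in>UNIV. (\<Sum>y'\<in>UNIV. pis (x, y')) * (\<Sum>x'\<in>UNIV. pis (x', y)) * of_int (f x y))"
  have conv: "(\<lambda>T. mpow R T u v) \<longlonglongrightarrow> pis v" for u v
    by (rule conv_primitive[OF stR invR m1 Rmpos])
  have lim: "(\<lambda>T. mu_star_T R pis f T) \<longlonglongrightarrow>
      (\<Sum>u\<in>UNIV. \<Sum>v\<in>UNIV. pis u * pis v * of_int (f (fst u) (snd v)))"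
    unfolding mu_star_T_def by (intro tendsto_intros conv)
  have Leq: "(\<Sum>u\<in>UNIV. \<Sum>v\<in>UNIV. pis u * pis v * of_int (f (fst u) (snd v))) = L"
  proof -
    have "(\<Sum>u\<in>UNIV. \<Sum>v\<in>UNIV. pis u * pis v * of_int (f (fst u) (snd v)))
        = (\<Sum>x\<in>UNIV. \<Sum>y'\<in>UNIV. \<Sum>x'\<in>UNIV. \<Sum>y\<in>UNIV. pis (x, y') * pis (x', y) * real_of_int (f x y))"
      by (simp add: sum_pair_UNIV)
    also have "\<dots> = (\<Sum>x\<in>UNIV. \<Sum>y\<in>UNIV. \<Sum>x'\<in>UNIV. \<Sum>y'\<in>UNIV. pis (x, y') * pis (x', y) * real_of_int (f x y))"
    proof (rule sum.cong[OF refl])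
      fix x
      have "(\<Sum>y'\<in>UNIV. \<Sum>x'\<in>UNIV. \<Sum>y\<in>UNIV. pis (x, y') * pis (x', y) * real_of_int (f x y))
          = (\<Sum>y'\<in>UNIV. \<Sum>y\<in>UNIV. \<Sum>x'\<in>UNIV. pis (x, y') * pis (x', y) * real_of_int (f x y))"
        by (rule sum.cong[OF refl], rule sum.swap)
      also have "\<dots> = (\<Sum>y\<in>UNIV. \<Sum>y'\<in>UNIV. \<Sum>x'\<in>UNIV. pis (x, y') * pis (x', y) * real_of_int (f x y))"
        by (rule sum.swap)
      also have "\<dots> = (\<Sum>y\<in>UNIV. \<Sum>x'\<in>UNIV. \<Sum>y'\<in>UNIV. pis (x, y') * pis (x', y) * real_of_int (f x y))"
        by (rule sum.cong[OF refl], rule sum.swap)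
      finally show "(\<Sum>y'\<in>UNIV. \<Sum>x'\<in>UNIV. \<Sum>y\<in>UNIV. pis (x, y') * pis (x', y) * real_of_int (f x y))
          = (\<Sum>y\<in>UNIV. \<Sum>x'\<in>UNIV. \<Sum>y'\<in>UNIV. pis (x, y') * pis (x', y) * real_of_int (f x y))" .
    qed
    also have "\<dots> = L" unfolding L_def by (simp add: sum_distrib_left sum_distrib_right mult.assoc)
    finally show ?thesis .
  qed
  have "L < (\<Sum>u\<in>UNIV. pis u * of_int (f (fst u) (snd u)))"
    using ineq unfolding L_def F_def by simp
  moreover have lim': "(\<lambda>T. mu_star_T (Rstar P Q f \<theta>s rs) pis f T) \<longlonglongrightarrow> L"
    using lim Leq unfolding R_def by simp
  ultimately show ?thesis unfolding L_def by blast
qed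

end
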